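(* Let $\pi_k$ (target policy), $\beta_k$ and $\beta_{k+1}$ (behavioral policies) be stationary policies, let $\pi_{k+1}=\beta_{k+1}$, and let $\mu_k=d^{\beta_k}$. Let $q$ be an estimate of $Q^{\pi_k}$. Assume (i) $\max_{s}d_{TV}\big(\beta_k(\cdot|s),\beta_{k+1}(\cdot|s)\big)\le\delta(1-\gamma)$; (ii) $\varepsilon(\mu_k,q)\le\varepsilon$; and (iii) $|Q^{\pi_k}(s,a)-q(s,a)|\le\frac{1}{1-\gamma}$ for all $(s,a)$. Then $$V^{\pi_{k+1}}(s_0)-V^{\pi_k}(s_0)\;\ge\;\frac{1}{1-\gamma}\left(\mathbb{A}^{\pi_k}_{\pi_{k+1}}-\varepsilon-\frac{2\delta}{1-\gamma}\right).$$
   Context: Finite discounted MDP $(\mathcal{S},\mathcal{A},P,r,\gamma,s_0)$ with rewards in $[0,1]$, $\gamma\in[0,1)$, fixed initial state $s_0$. For a stationary policy $\pi$: $V^\pi,Q^\pi$ are its value and action-value functions and $d^{\pi}(s,a)=(1-\gamma)\sum_{t\ge0}\gamma^t\Pr_\pi(s_t=s,a_t=a)$ its discounted state-action visitation distribution from $s_0$. Weighted action-value error of an estimate $q$ of $Q^{\pi_k}$ on a distribution $\mu$: $\varepsilon(\mu,q)=\sum_{s,a}\mu(s,a)|Q^{\pi_k}(s,a)-q(s,a)|$. Estimated expected advantage: $\mathbb{A}^{\pi_k}_{\pi_{k+1}}=\mathbb{E}_{(s,a)\sim d^{\pi_{k+1}}}[q(s,a)-V^{\pi_k}(s)]$. Total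 variation: $d_{TV}(p,q)=\frac12\sum_x|p(x)-q(x)|$. *)

theory Defs
  imports "HOL-Analysis.Analysis"
begin

definition is_mdp :: "('s::finite \<Rightarrow> 'a::finite \<Rightarrow> 's \<Rightarrow> real) \<Rightarrow> ('s \<Rightarrow> 'a \<Rightarrow> real) \<Rightarrow> real \<Rightarrow> bool" where
  "is_mdp P r \<gamma> \<longleftrightarrow>
     (\<forall>s a s'. 0 \<le> P s a s') \<and> (\<forall>s a. (\<Sum>s'\<in>UNIV. P s a s') = 1) \<and>
     (\<forall>s a. 0 \<le> r s a \<and> r s a \<le> 1) \<and> 0 \<le> \<gamma> \<and> \<gamma> < 1"

definition stoch_policy :: "('s::finite \<Rightarrow> 'a::finite \<Rightarrow> real) \<Rightarrow> bool" where
  "stoch_policy \<pi> \<longleftrightarrow> (\<forall>s a. 0 \<le> \<pi> s a) \<and> (\<forall>s. (\<Sum>a\<in>UNIV. \<pi> s a) = 1)"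

text \<open>sa_dist P pi x t s a = Pr_pi(s_t = s, a_t = a) when starting from s_0 = x.\<close>
fun sa_dist :: "('s::finite \<Rightarrow> 'a::finite \<Rightarrow> 's \<Rightarrow> real) \<Rightarrow> ('s \<Rightarrow> 'a \<Rightarrow> real) \<Rightarrow> 's \<Rightarrow> nat \<Rightarrow> 's \<Rightarrow> 'a \<Rightarrow> real" where
  "sa_dist P \<pi> x 0 = (\<lambda>s a. (if s = x then 1 else 0) * \<pi> s a)"
| "sa_dist P \<pi> x (Suc t) =
     (\<lambda>s' a'. (\<Sum>s\<in>UNIV. \<Sum>a\<in>UNIV. sa_dist P \<pi> x t s a * P s a s') * \<pi> s' a')"

definition Vf :: "('s::finite \<Rightarrow> 'a::finite \<Rightarrow> 's \<Rightarrow> real) \<Rightarrow> ('s \<Rightarrow> 'a \<Rightarrow> real) \<Rightarrow> real \<Rightarrow> ('s \<Rightarrow> 'a \<Rightarrow> real) \<Rightarrow> 's \<Rightarrow> real" where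
  "Vf P r \<gamma> \<pi> x = (\<Sum>t. \<gamma> ^ t * (\<Sum>s\<in>UNIV. \<Sum>a\<in>UNIV. sa_dist P \<pi> x t s a * r s a))"

definition Qf :: "('s::finite \<Rightarrow> 'a::finite \<Rightarrow> 's \<Rightarrow> real) \<Rightarrow> ('s \<Rightarrow> 'a \<Rightarrow> real) \<Rightarrow> real \<Rightarrow> ('s \<Rightarrow> 'a \<Rightarrow> real) \<Rightarrow> 's \<Rightarrow> 'a \<Rightarrow> real" where
  "Qf P r \<gamma> \<pi> s a = r s a + \<gamma> * (\<Sum>s'\<in>UNIV. P s a s' * Vf P r \<gamma> \<pi> s')"

definition visit :: "('s::finite \<Rightarrow> 'a::finite \<Rightarrow> 's \<Rightarrow> real) \<Rightarrow> real \<Rightarrow> ('s \<Rightarrow> 'a \<Rightarrow> real) \<Rightarrow> 's \<Rightarrow> 's \<Rightarrow> 'a \<Rightarrow> real" where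
  "visit P \<gamma> \<pi> s0 s a = (1 - \<gamma>) * (\<Sum>t. \<gamma> ^ t * sa_dist P \<pi> s0 t s a)"

definition tv_dist :: "('x::finite \<Rightarrow> real) \<Rightarrow> ('x \<Rightarrow> real) \<Rightarrow> real" where
  "tv_dist p q = (1/2) * (\<Sum>x\<in>UNIV. \<bar>p x - q x\<bar>)"

definition werr :: "('s::finite \<Rightarrow> 'a::finite \<Rightarrow> real) \<Rightarrow> ('s \<Rightarrow> 'a \<Rightarrow> real) \<Rightarrow> ('s \<Rightarrow> 'a \<Rightarrow> real) \<Rightarrow> real" where
  "werr \<mu> Qt q = (\<Sum>s\<in>UNIV. \<Sum>a\<in>UNIV. \<mu> s a * \<bar>Qt s a - q s a\<bar>)"

definition est_adv :: "('s::finite \<Rightarrow> 'a::finite \<Rightarrow> real) \<Rightarrow> ('s \<Rightarrow> 'a \<Rightarrow> real) \<Rightarrow> ('s \<Rightarrow> real) \<Rightarrow> real" where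
  "est_adv d q V = (\<Sum>s\<in>UNIV. \<Sum>a\<in>UNIV. d s a * (q s a - V s))"

end

theory Submission
  imports Defs
begin

lemma sa_nonneg:
  assumes "is_mdp P r \<gamma>" "stoch_policy \<pi>"
  shows "0 \<le> sa_dist P \<pi> x t s a"
  using assms
proof (induction t arbitrary: s a)
  case 0 then show ?case by (simp add: stoch_policy_def)
next
  case (Suc t)
  have "0 \<le> (\<Sum>s\<in>UNIV. \<Sum>a\<in>UNIV. sa_dist P \<pi> x t s a * P s a s')" for s'
    using Suc by (intro sum_nonneg) (auto simp: is_mdp_def)
  then show ?case using Suc.prems by (simp add: stoch_policy_def)
qed

lemma sa_mass:
  assumes "is_mdp P r \<gamma>" "stoch_policy \<pi>"
  shows "(\<Sum>s\<in>UNIV. \<Sum>a\<in>UNIV. sa_dist P \<pi> x t s a) = 1"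
proof (induction t)
  case 0
  have "(\<Sum>s\<in>UNIV. \<Sum>a\<in>UNIV. (if s = x then 1 else 0) * \<pi> s a) = (\<Sum>a\<in>UNIV. \<pi> x a)"
  proof -
    have "(\<Sum>a\<in>UNIV. (if s = x then 1 else 0) * \<pi> s a) = (if s = x then (\<Sum>a\<in>UNIV. \<pi> x a) else 0)" for s
      by auto
    then show ?thesis by simp
  qed
  then show ?case using assms by (simp add: stoch_policy_def)
next
  case (Suc t)
  have "(\<Sum>s'\<in>UNIV. \<Sum>a'\<in>UNIV. sa_dist P \<pi> x (Suc t) s' a')
      = (\<Sum>s'\<in>UNIV. (\<Sum>s\<in>UNIV. \<Sum>a\<in>UNIV. sa_dist P \<pi> x t s a * P s a s'))"
    using assms by (simp add: stoch_policy_def sum_distrib_left[symmetric])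
  also have "\<dots> = (\<Sum>s\<in>UNIV. \<Sum>s'\<in>UNIV. \<Sum>a\<in>UNIV. sa_dist P \<pi> x t s a * P s a s')"
    by (rule sum.swap)
  also have "\<dots> = (\<Sum>s\<in>UNIV. \<Sum>a\<in>UNIV. \<Sum>s'\<in>UNIV. sa_dist P \<pi> x t s a * P s a s')"
    by (rule sum.cong[OF refl], rule sum.swap)
  also have "\<dots> = (\<Sum>s\<in>UNIV. \<Sum>a\<in>UNIV. sa_dist P \<pi> x t s a * (\<Sum>s'\<in>UNIV. P s a s'))"
    by (simp add: sum_distrib_left)
  also have "\<dots> = 1" using assms Suc by (simp add: is_mdp_def)
  finally show ?case .
qed

lemma sa_le1:
  assumes "is_mdp P r \<gamma>" "stoch_policy \<pi>"
  shows "sa_dist P \<pi> x t s a \<le> 1"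
proof -
  have "sa_dist P \<pi> x t s a \<le> (\<Sum>a\<in>UNIV. sa_dist P \<pi> x t s a)"
    by (rule member_le_sum) (auto intro: sa_nonneg[OF assms])
  also have "\<dots> \<le> (\<Sum>s\<in>UNIV. \<Sum>a\<in>UNIV. sa_dist P \<pi> x t s a)"
    by (rule member_le_sum[where f="\<lambda>s. \<Sum>a\<in>UNIV. sa_dist P \<pi> x t s a"]) (auto intro!: sum_nonneg sa_nonneg[OF assms])
  finally show ?thesis using sa_mass[OF assms] by simp
qed

lemma sa_summable:
  assumes "is_mdp P r \<gamma>" "stoch_policy \<pi>"
  shows "summable (\<lambda>t. \<gamma>^t * sa_dist P \<pi> x t s a * c)"
proof -
  have g: "0 \<le> \<gamma>" "\<gamma> < 1" using assms(1) by (auto simp: is_mdp_def)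
  have "summable (\<lambda>t. \<gamma>^t * sa_dist P \<pi> x t s a)"
  proof (rule summable_comparison_test)
    show "\<exists>N. \<forall>n\<ge>N. norm (\<gamma>^n * sa_dist P \<pi> x n s a) \<le> \<gamma>^n"
      using sa_nonneg[OF assms] sa_le1[OF assms] g
      by (auto simp: abs_mult intro!: mult_left_le)
    show "summable (\<lambda>n. \<gamma>^n)" using g by (intro summable_geometric) auto
  qed
  then show ?thesis by (rule summable_mult2)
qed

lemma sa_summable2:
  assumes "is_mdp P r \<gamma>" "stoch_policy \<pi>"
  shows "summable (\<lambda>t. \<gamma>^t * (\<Sum>s\<in>UNIV. \<Sum>a\<in>UNIV. sa_dist P \<pi> x t s a * h s a))"
proof -
  have "summable (\<lambda>t. \<Sum>s\<in>UNIV. \<Sum>a\<in>UNIV. \<gamma>^t * sa_dist P \<pi> x t s a * h s a)"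
    by (intro summable_sum sa_summable[OF assms])
  then show ?thesis by (simp add: sum_distrib_left mult.assoc)
qed

lemma visit_sum:
  assumes "is_mdp P r \<gamma>" "stoch_policy \<pi>"
  shows "(\<Sum>s\<in>UNIV. \<Sum>a\<in>UNIV. visit P \<gamma> \<pi> x s a * h s a)
     = (1 - \<gamma>) * (\<Sum>t. \<gamma>^t * (\<Sum>s\<in>UNIV. \<Sum>a\<in>UNIV. sa_dist P \<pi> x t s a * h s a))"
proof -
  have "(\<Sum>s\<in>UNIV. \<Sum>a\<in>UNIV. visit P \<gamma> \<pi> x s a * h s a)
      = (1 - \<gamma>) * (\<Sum>s\<in>UNIV. \<Sum>a\<in>UNIV. (\<Sum>t. \<gamma>^t * sa_dist P \<pi> x t s a) * h s a)"
    by (simp add: visit_def sum_distrib_left mult.assoc)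
  also have "\<dots> = (1 - \<gamma>) * (\<Sum>s\<in>UNIV. \<Sum>a\<in>UNIV. (\<Sum>t. \<gamma>^t * sa_dist P \<pi> x t s a * h s a))"
    using sa_summable[OF assms, where c=1] by (simp add: suminf_mult2)
  also have "\<dots> = (1 - \<gamma>) * (\<Sum>t. \<Sum>s\<in>UNIV. \<Sum>a\<in>UNIV. \<gamma>^t * sa_dist P \<pi> x t s a * h s a)"
  proof -
    have "(\<Sum>s\<in>UNIV. \<Sum>a\<in>UNIV. (\<Sum>t. \<gamma>^t * sa_dist P \<pi> x t s a * h s a))
        = (\<Sum>s\<in>UNIV. (\<Sum>t. \<Sum>a\<in>UNIV. \<gamma>^t * sa_dist P \<pi> x t s a * h s a))"
      by (intro sum.cong refl suminf_sum[symmetric] sa_summable[OF assms])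
    also have "\<dots> = (\<Sum>t. \<Sum>s\<in>UNIV. \<Sum>a\<in>UNIV. \<gamma>^t * sa_dist P \<pi> x t s a * h s a)"
      by (intro suminf_sum[symmetric] summable_sum sa_summable[OF assms])
    finally show ?thesis by simp
  qed
  also have "\<dots> = (1 - \<gamma>) * (\<Sum>t. \<gamma>^t * (\<Sum>s\<in>UNIV. \<Sum>a\<in>UNIV. sa_dist P \<pi> x t s a * h s a))"
    by (simp add: sum_distrib_left mult.assoc)
  finally show ?thesis .
qed

lemma push_swap:
  fixes \<mu> :: "'s::finite \<Rightarrow> 'a::finite \<Rightarrow> real"
  shows "(\<Sum>s\<in>UNIV. \<Sum>a\<in>UNIV. \<mu> s a * (\<Sum>s'\<in>UNIV. P s a s' * f s'))
       = (\<Sum>s'\<in>UNIV. (\<Sum>s\<in>UNIV. \<Sum>a\<in>UNIV. \<mu> s a * P s a s') * f s')"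
proof -
  have "(\<Sum>s\<in>UNIV. \<Sum>a\<in>UNIV. \<mu> s a * (\<Sum>s'\<in>UNIV. P s a s' * f s'))
      = (\<Sum>s\<in>UNIV. \<Sum>a\<in>UNIV. \<Sum>s'\<in>UNIV. \<mu> s a * P s a s' * f s')"
    by (simp add: sum_distrib_left mult.assoc)
  also have "\<dots> = (\<Sum>s\<in>UNIV. \<Sum>s'\<in>UNIV. \<Sum>a\<in>UNIV. \<mu> s a * P s a s' * f s')"
    by (rule sum.cong[OF refl], rule sum.swap)
  also have "\<dots> = (\<Sum>s'\<in>UNIV. \<Sum>s\<in>UNIV. \<Sum>a\<in>UNIV. \<mu> s a * P s a s' * f s')"
    by (rule sum.swap)
  also have "\<dots> = (\<Sum>s'\<in>UNIV. (\<Sum>s\<in>UNIV. \<Sum>a\<in>UNIV. \<mu> s a * P s a s') * f s')"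
    by (simp add: sum_distrib_right)
  finally show ?thesis .
qed

lemma aux_sum: "(\<Sum>a\<in>A. (c::real) * f a * v) = c * v * (\<Sum>a\<in>A. f a)"
  by (simp add: sum_distrib_left mult_ac)

lemma pdl:
  assumes mdp: "is_mdp P r \<gamma>" and pol: "stoch_policy \<pi>" and Vb: "\<forall>s. \<bar>V s\<bar> \<le> B"
  shows "(\<lambda>t. \<gamma>^t * (\<Sum>s\<in>UNIV. \<Sum>a\<in>UNIV. sa_dist P \<pi> x t s a *
            ((r s a + \<gamma> * (\<Sum>s'\<in>UNIV. P s a s' * V s')) - V s))) sums (Vf P r \<gamma> \<pi> x - V x)"
proof -
  define W where "W t = (\<Sum>s\<in>UNIV. \<Sum>a\<in>UNIV. sa_dist P \<pi> x t s a * V s)" for t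
  define R where "R t = (\<Sum>s\<in>UNIV. \<Sum>a\<in>UNIV. sa_dist P \<pi> x t s a * r s a)" for t
  have g: "0 \<le> \<gamma>" "\<gamma> < 1" using mdp by (auto simp: is_mdp_def)
  have WS: "W (Suc t) = (\<Sum>s\<in>UNIV. \<Sum>a\<in>UNIV. sa_dist P \<pi> x t s a * (\<Sum>s'\<in>UNIV. P s a s' * V s'))" for t
  proof -
    have "W (Suc t) = (\<Sum>s'\<in>UNIV. (\<Sum>s\<in>UNIV. \<Sum>a\<in>UNIV. sa_dist P \<pi> x t s a * P s a s') * V s' * (\<Sum>a'\<in>UNIV. \<pi> s' a'))"
      unfolding W_def sa_dist.simps
      by (intro sum.cong refl, rule aux_sum)
    also have "\<dots> = (\<Sum>s'\<in>UNIV. (\<Sum>s\<in>UNIV. \<Sum>a\<in>UNIV. sa_dist P \<pi> x t s a * P s a s') * V s')"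
      using pol by (simp add: stoch_policy_def)
    finally show ?thesis by (simp add: push_swap)
  qed
  have key: "\<gamma>^t * (\<Sum>s\<in>UNIV. \<Sum>a\<in>UNIV. sa_dist P \<pi> x t s a *
            ((r s a + \<gamma> * (\<Sum>s'\<in>UNIV. P s a s' * V s')) - V s))
      = \<gamma>^t * R t + (\<gamma>^(Suc t) * W (Suc t) - \<gamma>^t * W t)" for t
  proof -
    have "\<gamma>^t * (\<Sum>s\<in>UNIV. \<Sum>a\<in>UNIV. sa_dist P \<pi> x t s a *
            ((r s a + \<gamma> * (\<Sum>s'\<in>UNIV. P s a s' * V s')) - V s))
      = \<gamma>^t * R t + (\<gamma>^(Suc t) * (\<Sum>s\<in>UNIV. \<Sum>a\<in>UNIV. sa_dist P \<pi> x t s a * (\<Sum>s'\<in>UNIV. P s a s' * V s')) - \<gamma>^t * W t)"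
      unfolding R_def W_def
      by (simp add: algebra_simps sum.distrib sum_subtractf sum_distrib_left)
    then show ?thesis by (simp only: WS)
  qed
  have s1: "(\<lambda>t. \<gamma>^t * R t) sums Vf P r \<gamma> \<pi> x"
    unfolding R_def Vf_def by (rule summable_sums, rule sa_summable2[OF mdp pol])
  have Wb: "\<bar>W t\<bar> \<le> B" for t
  proof -
    have "\<bar>W t\<bar> \<le> (\<Sum>s\<in>UNIV. \<Sum>a\<in>UNIV. \<bar>sa_dist P \<pi> x t s a * V s\<bar>)"
      unfolding W_def by (rule order_trans[OF sum_abs], rule sum_mono, rule sum_abs)
    also have "\<dots> \<le> (\<Sum>s\<in>UNIV. \<Sum>a\<in>UNIV. sa_dist P \<pi> x t s a * B)"
      using sa_nonneg[OF mdp pol] Vb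
      by (intro sum_mono) (simp add: abs_mult mult_left_mono)
    also have "\<dots> = B" using sa_mass[OF mdp pol]
      by (simp add: sum_distrib_right[symmetric])
    finally show ?thesis .
  qed
  have lim: "(\<lambda>t. \<gamma>^t * W t) \<longlonglongrightarrow> 0"
  proof (rule Lim_null_comparison)
    show "\<forall>\<^sub>F t in sequentially. norm (\<gamma>^t * W t) \<le> \<gamma>^t * B"
      using Wb g by (intro always_eventually allI) (simp add: abs_mult mult_left_mono)
    show "(\<lambda>t. \<gamma>^t * B) \<longlonglongrightarrow> 0"
      using g by (intro tendsto_mult_left_zero LIMSEQ_power_zero) auto
  qed
  have s2: "(\<lambda>t. \<gamma>^(Suc t) * W (Suc t) - \<gamma>^t * W t) sums (0 - \<gamma>^0 * W 0)"
    using telescope_sums[OF lim] by simp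
  have W0: "W 0 = V x"
  proof -
    have "(\<Sum>a\<in>UNIV. (if s = x then 1 else 0) * \<pi> s a * V s) = (if s = x then (\<Sum>a\<in>UNIV. \<pi> x a) * V x else 0)" for s
      by (auto simp: sum_distrib_right)
    then show ?thesis using pol unfolding W_def by (simp add: stoch_policy_def)
  qed
  show ?thesis unfolding key using sums_add[OF s1 s2] W0 by simp
qed

lemma push_one:
  assumes "is_mdp P r \<gamma>"
  shows "(\<Sum>s'\<in>UNIV. (\<Sum>s\<in>UNIV. \<Sum>a\<in>UNIV. \<mu> s a * P s a s'))
       = (\<Sum>s\<in>UNIV. \<Sum>a\<in>UNIV. (\<mu> s a :: real))"
  using push_swap[of \<mu> P "\<lambda>_. 1"] assms by (simp add: is_mdp_def)

lemma sa_diff: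
  assumes mdp: "is_mdp P r \<gamma>" and p1: "stoch_policy \<beta>" and p2: "stoch_policy \<beta>'"
    and tv: "\<forall>s. (\<Sum>a\<in>UNIV. \<bar>\<beta>' s a - \<beta> s a\<bar>) \<le> 2 * \<alpha>"
  shows "(\<Sum>s\<in>UNIV. \<Sum>a\<in>UNIV. \<bar>sa_dist P \<beta>' x t s a - sa_dist P \<beta> x t s a\<bar>) \<le> 2 * \<alpha> * (real t + 1)"
proof (induction t)
  case 0
  have "(\<Sum>a\<in>UNIV. \<bar>(if s = x then 1 else 0) * \<beta>' s a - (if s = x then 1 else 0) * \<beta> s a\<bar>)
     = (if s = x then (\<Sum>a\<in>UNIV. \<bar>\<beta>' x a - \<beta> x a\<bar>) else 0)" for s
    by auto
  then show ?case using tv by simp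
next
  case (Suc t)
  define \<nu>' where "\<nu>' s' = (\<Sum>s\<in>UNIV. \<Sum>a\<in>UNIV. sa_dist P \<beta>' x t s a * P s a s')" for s'
  define \<nu> where "\<nu> s' = (\<Sum>s\<in>UNIV. \<Sum>a\<in>UNIV. sa_dist P \<beta> x t s a * P s a s')" for s'
  have nu_nn: "0 \<le> \<nu> s'" for s'
    unfolding \<nu>_def using sa_nonneg[OF mdp p1] mdp by (intro sum_nonneg) (auto simp: is_mdp_def)
  have nu_sum: "(\<Sum>s'\<in>UNIV. \<nu> s') = 1"
    unfolding \<nu>_def push_one[OF mdp] using sa_mass[OF mdp p1] .
  have d_le: "(\<Sum>s'\<in>UNIV. \<bar>\<nu>' s' - \<nu> s'\<bar>)
      \<le> (\<Sum>s\<in>UNIV. \<Sum>a\<in>UNIV. \<bar>sa_dist P \<beta>' x t s a - sa_dist P \<beta> x t s a\<bar>)"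
  proof -
    have "\<bar>\<nu>' s' - \<nu> s'\<bar> \<le> (\<Sum>s\<in>UNIV. \<Sum>a\<in>UNIV. \<bar>sa_dist P \<beta>' x t s a - sa_dist P \<beta> x t s a\<bar> * P s a s')" for s'
    proof -
      have "\<bar>\<nu>' s' - \<nu> s'\<bar> = \<bar>(\<Sum>s\<in>UNIV. \<Sum>a\<in>UNIV. (sa_dist P \<beta>' x t s a - sa_dist P \<beta> x t s a) * P s a s')\<bar>"
        unfolding \<nu>'_def \<nu>_def by (simp only: left_diff_distrib sum_subtractf)
      also have "\<dots> \<le> (\<Sum>s\<in>UNIV. \<Sum>a\<in>UNIV. \<bar>(sa_dist P \<beta>' x t s a - sa_dist P \<beta> x t s a) * P s a s'\<bar>)"
        by (rule order_trans[OF sum_abs], rule sum_mono, rule sum_abs)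
      also have "\<dots> = (\<Sum>s\<in>UNIV. \<Sum>a\<in>UNIV. \<bar>sa_dist P \<beta>' x t s a - sa_dist P \<beta> x t s a\<bar> * P s a s')"
        using mdp by (simp add: abs_mult is_mdp_def)
      finally show ?thesis .
    qed
    then have "(\<Sum>s'\<in>UNIV. \<bar>\<nu>' s' - \<nu> s'\<bar>) \<le> (\<Sum>s'\<in>UNIV. \<Sum>s\<in>UNIV. \<Sum>a\<in>UNIV. \<bar>sa_dist P \<beta>' x t s a - sa_dist P \<beta> x t s a\<bar> * P s a s')"
      by (rule sum_mono)
    also have "\<dots> = (\<Sum>s\<in>UNIV. \<Sum>a\<in>UNIV. \<bar>sa_dist P \<beta>' x t s a - sa_dist P \<beta> x t s a\<bar>)"
      by (rule push_one[OF mdp, where \<mu>="\<lambda>s a. \<bar>sa_dist P \<beta>' x t s a - sa_dist P \<beta> x t s a\<bar>"])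
    finally show ?thesis .
  qed
  have per: "(\<Sum>a'\<in>UNIV. \<bar>\<nu>' s' * \<beta>' s' a' - \<nu> s' * \<beta> s' a'\<bar>) \<le> \<bar>\<nu>' s' - \<nu> s'\<bar> + \<nu> s' * (2 * \<alpha>)" for s'
  proof -
    have "(\<Sum>a'\<in>UNIV. \<bar>\<nu>' s' * \<beta>' s' a' - \<nu> s' * \<beta> s' a'\<bar>)
        \<le> (\<Sum>a'\<in>UNIV. \<bar>\<nu>' s' - \<nu> s'\<bar> * \<beta>' s' a' + \<nu> s' * \<bar>\<beta>' s' a' - \<beta> s' a'\<bar>)"
    proof (rule sum_mono)
      fix a' 
      have "\<bar>\<nu>' s' * \<beta>' s' a' - \<nu> s' * \<beta> s' a'\<bar> = \<bar>(\<nu>' s' - \<nu> s') * \<beta>' s' a' + \<nu> s' * (\<beta>' s' a' - \<beta> s' a')\<bar>"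
        by (simp add: algebra_simps)
      also have "\<dots> \<le> \<bar>\<nu>' s' - \<nu> s'\<bar> * \<beta>' s' a' + \<nu> s' * \<bar>\<beta>' s' a' - \<beta> s' a'\<bar>"
        using p2 nu_nn[of s'] abs_triangle_ineq[of "(\<nu>' s' - \<nu> s') * \<beta>' s' a'" "\<nu> s' * (\<beta>' s' a' - \<beta> s' a')"]
        by (simp add: stoch_policy_def abs_mult)
      finally show "\<bar>\<nu>' s' * \<beta>' s' a' - \<nu> s' * \<beta> s' a'\<bar> \<le> \<bar>\<nu>' s' - \<nu> s'\<bar> * \<beta>' s' a' + \<nu> s' * \<bar>\<beta>' s' a' - \<beta> s' a'\<bar>" .
    qed
    also have "\<dots> = \<bar>\<nu>' s' - \<nu> s'\<bar> * (\<Sum>a'\<in>UNIV. \<beta>' s' a') + \<nu> s' * (\<Sum>a'\<in>UNIV. \<bar>\<beta>' s' a' - \<beta> s' a'\<bar>)"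
      by (simp add: sum.distrib sum_distrib_left)
    also have "\<dots> \<le> \<bar>\<nu>' s' - \<nu> s'\<bar> + \<nu> s' * (2 * \<alpha>)"
      using p2 tv nu_nn[of s'] by (simp add: stoch_policy_def mult_left_mono)
    finally show ?thesis .
  qed
  have "(\<Sum>s\<in>UNIV. \<Sum>a\<in>UNIV. \<bar>sa_dist P \<beta>' x (Suc t) s a - sa_dist P \<beta> x (Suc t) s a\<bar>)
      = (\<Sum>s'\<in>UNIV. \<Sum>a'\<in>UNIV. \<bar>\<nu>' s' * \<beta>' s' a' - \<nu> s' * \<beta> s' a'\<bar>)"
    by (simp only: sa_dist.simps \<nu>'_def \<nu>_def)
  also have "\<dots> \<le> (\<Sum>s'\<in>UNIV. \<bar>\<nu>' s' - \<nu> s'\<bar> + \<nu> s' * (2 * \<alpha>))"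
    by (rule sum_mono, rule per)
  also have "\<dots> = (\<Sum>s'\<in>UNIV. \<bar>\<nu>' s' - \<nu> s'\<bar>) + 2 * \<alpha>"
    using nu_sum by (simp add: sum.distrib sum_distrib_right[symmetric])
  also have "\<dots> \<le> 2 * \<alpha> * (real t + 1) + 2 * \<alpha>"
    using d_le Suc.IH by linarith
  finally show ?case by (simp add: algebra_simps)
qed

lemma visit_diff:
  assumes mdp: "is_mdp P r \<gamma>" and p1: "stoch_policy \<beta>" and p2: "stoch_policy \<beta>'"
    and tv: "\<forall>s. (\<Sum>a\<in>UNIV. \<bar>\<beta>' s a - \<beta> s a\<bar>) \<le> 2 * \<alpha>"
    and gb: "\<forall>s a. 0 \<le> g s a \<and> g s a \<le> G"
  shows "(\<Sum>s\<in>UNIV. \<Sum>a\<in>UNIV. visit P \<gamma> \<beta>' x s a * g s a)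
       - (\<Sum>s\<in>UNIV. \<Sum>a\<in>UNIV. visit P \<gamma> \<beta> x s a * g s a) \<le> 2 * \<alpha> * G / (1 - \<gamma>)"
proof -
  have g: "0 \<le> \<gamma>" "\<gamma> < 1" using mdp by (auto simp: is_mdp_def)
  have G0: "0 \<le> G" using gb by (meson order_trans)
  define A' where "A' t = \<gamma>^t * (\<Sum>s\<in>UNIV. \<Sum>a\<in>UNIV. sa_dist P \<beta>' x t s a * g s a)" for t
  define A where "A t = \<gamma>^t * (\<Sum>s\<in>UNIV. \<Sum>a\<in>UNIV. sa_dist P \<beta> x t s a * g s a)" for t
  have sA': "summable A'" unfolding A'_def by (rule sa_summable2[OF mdp p2])
  have sA: "summable A" unfolding A_def by (rule sa_summable2[OF mdp p1])
  have geo: "(\<lambda>t. 2 * \<alpha> * G * (of_nat (Suc t) * \<gamma>^t)) sums (2 * \<alpha> * G * (1 / (1 - \<gamma>)^2))"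
    using g by (intro sums_mult geometric_deriv_sums) auto
  have le: "A' t - A t \<le> 2 * \<alpha> * G * (of_nat (Suc t) * \<gamma>^t)" for t
  proof -
    have "A' t - A t = \<gamma>^t * (\<Sum>s\<in>UNIV. \<Sum>a\<in>UNIV. (sa_dist P \<beta>' x t s a - sa_dist P \<beta> x t s a) * g s a)"
      unfolding A'_def A_def by (simp only: right_diff_distrib[symmetric] left_diff_distrib sum_subtractf)
    also have "\<dots> \<le> \<gamma>^t * (\<Sum>s\<in>UNIV. \<Sum>a\<in>UNIV. \<bar>sa_dist P \<beta>' x t s a - sa_dist P \<beta> x t s a\<bar> * G)"
    proof (intro mult_left_mono sum_mono)
      fix s a
      have "(sa_dist P \<beta>' x t s a - sa_dist P \<beta> x t s a) * g s a \<le> \<bar>sa_dist P \<beta>' x t s a - sa_dist P \<beta> x t s a\<bar> * g s a"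
        using gb by (intro mult_right_mono) auto
      also have "\<dots> \<le> \<bar>sa_dist P \<beta>' x t s a - sa_dist P \<beta> x t s a\<bar> * G"
        using gb by (intro mult_left_mono) auto
      finally show "(sa_dist P \<beta>' x t s a - sa_dist P \<beta> x t s a) * g s a \<le> \<bar>sa_dist P \<beta>' x t s a - sa_dist P \<beta> x t s a\<bar> * G" .
    qed (use g in auto)
    also have "\<dots> = \<gamma>^t * G * (\<Sum>s\<in>UNIV. \<Sum>a\<in>UNIV. \<bar>sa_dist P \<beta>' x t s a - sa_dist P \<beta> x t s a\<bar>)"
      by (simp add: sum_distrib_left sum_distrib_right mult_ac)
    also have "\<dots> \<le> \<gamma>^t * G * (2 * \<alpha> * (real t + 1))"
      using g G0 by (intro mult_left_mono sa_diff[OF mdp p1 p2 tv]) auto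
    also have "\<dots> = 2 * \<alpha> * G * (of_nat (Suc t) * \<gamma>^t)"
      by (simp add: algebra_simps)
    finally show ?thesis .
  qed
  have "(\<Sum>t. A' t - A t) \<le> 2 * \<alpha> * G * (1 / (1 - \<gamma>)^2)"
    using suminf_le[OF le summable_diff[OF sA' sA] sums_summable[OF geo]] sums_unique[OF geo] by simp
  moreover have "(\<Sum>s\<in>UNIV. \<Sum>a\<in>UNIV. visit P \<gamma> \<beta>' x s a * g s a)
       - (\<Sum>s\<in>UNIV. \<Sum>a\<in>UNIV. visit P \<gamma> \<beta> x s a * g s a) = (1 - \<gamma>) * (\<Sum>t. A' t - A t)"
    unfolding visit_sum[OF mdp p2] visit_sum[OF mdp p1] A'_def[symmetric] A_def[symmetric]
    using suminf_diff[OF sA' sA] by (metis right_diff_distrib)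
  ultimately have "(\<Sum>s\<in>UNIV. \<Sum>a\<in>UNIV. visit P \<gamma> \<beta>' x s a * g s a)
       - (\<Sum>s\<in>UNIV. \<Sum>a\<in>UNIV. visit P \<gamma> \<beta> x s a * g s a) \<le> (1 - \<gamma>) * (2 * \<alpha> * G * (1 / (1 - \<gamma>)^2))"
    apply -
  proof -
    assume a1: "(\<Sum>t. A' t - A t) \<le> 2 * \<alpha> * G * (1 / (1 - \<gamma>)^2)"
    assume a2: "(\<Sum>s\<in>UNIV. \<Sum>a\<in>UNIV. visit P \<gamma> \<beta>' x s a * g s a)
       - (\<Sum>s\<in>UNIV. \<Sum>a\<in>UNIV. visit P \<gamma> \<beta> x s a * g s a) = (1 - \<gamma>) * (\<Sum>t. A' t - A t)"
    show ?thesis unfolding a2 by (rule mult_left_mono[OF a1]) (use g in simp)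
  qed
  also have "\<dots> = 2 * \<alpha> * G / (1 - \<gamma>)"
    using g by (simp add: power2_eq_square)
  finally show ?thesis .
qed

lemma Vf_bound:
  assumes mdp: "is_mdp P r \<gamma>" and pol: "stoch_policy \<pi>"
  shows "\<bar>Vf P r \<gamma> \<pi> x\<bar> \<le> 1 / (1 - \<gamma>)"
proof -
  have g: "0 \<le> \<gamma>" "\<gamma> < 1" using mdp by (auto simp: is_mdp_def)
  define R where "R t = (\<Sum>s\<in>UNIV. \<Sum>a\<in>UNIV. sa_dist P \<pi> x t s a * r s a)" for t
  have R0: "0 \<le> R t" for t
    unfolding R_def using sa_nonneg[OF mdp pol] mdp by (intro sum_nonneg mult_nonneg_nonneg) (auto simp: is_mdp_def)
  have R1: "R t \<le> 1" for t
  proof -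
    have "R t \<le> (\<Sum>s\<in>UNIV. \<Sum>a\<in>UNIV. sa_dist P \<pi> x t s a * 1)"
      unfolding R_def using sa_nonneg[OF mdp pol] mdp
      by (intro sum_mono mult_left_mono) (auto simp: is_mdp_def)
    then show ?thesis using sa_mass[OF mdp pol] by simp
  qed
  have sR: "summable (\<lambda>t. \<gamma>^t * R t)" unfolding R_def by (rule sa_summable2[OF mdp pol])
  have geo: "(\<lambda>t. \<gamma>^t) sums (1 / (1 - \<gamma>))" using g geometric_sums[of \<gamma>] by auto
  have "Vf P r \<gamma> \<pi> x = (\<Sum>t. \<gamma>^t * R t)" unfolding Vf_def R_def ..
  moreover have "0 \<le> (\<Sum>t. \<gamma>^t * R t)" using sR R0 g by (intro suminf_nonneg) auto
  moreover have "(\<Sum>t. \<gamma>^t * R t) \<le> (\<Sum>t. \<gamma>^t)"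
    using R1 g by (intro suminf_le sR sums_summable[OF geo]) (simp add: mult_left_le)
  ultimately show ?thesis using sums_unique[OF geo] by simp
qed

lemma visit_nonneg:
  assumes mdp: "is_mdp P r \<gamma>" and pol: "stoch_policy \<pi>"
  shows "0 \<le> visit P \<gamma> \<pi> x s a"
proof -
  have g: "0 \<le> \<gamma>" "\<gamma> < 1" using mdp by (auto simp: is_mdp_def)
  have "0 \<le> (\<Sum>t. \<gamma>^t * sa_dist P \<pi> x t s a)"
    using sa_summable[OF mdp pol, where c=1] sa_nonneg[OF mdp pol] g by (intro suminf_nonneg) auto
  then show ?thesis unfolding visit_def using g by simp
qed

theorem theorem2:
  fixes P :: "'s::finite \<Rightarrow> 'a::finite \<Rightarrow> 's \<Rightarrow> real"
    and r :: "'s \<Rightarrow> 'a \<Rightarrow> real" and \<gamma> :: real and s0 :: 's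
    and \<pi>k \<beta>k \<beta>k1 \<pi>k1 :: "'s \<Rightarrow> 'a \<Rightarrow> real"
    and q :: "'s \<Rightarrow> 'a \<Rightarrow> real" and \<delta> \<epsilon> :: real
  assumes mdp: "is_mdp P r \<gamma>"
    and pol: "stoch_policy \<pi>k" "stoch_policy \<beta>k" "stoch_policy \<beta>k1"
    and pi_next: "\<pi>k1 = \<beta>k1"
    and tv: "\<forall>s. tv_dist (\<beta>k s) (\<beta>k1 s) \<le> \<delta> * (1 - \<gamma>)"
    and err: "werr (visit P \<gamma> \<beta>k s0) (Qf P r \<gamma> \<pi>k) q \<le> \<epsilon>"
    and bnd: "\<forall>s a. \<bar>Qf P r \<gamma> \<pi>k s a - q s a\<bar> \<le> 1 / (1 - \<gamma>)"
  shows "Vf P r \<gamma> \<pi>k1 s0 - Vf P r \<gamma> \<pi>k s0 \<ge>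
    1 / (1 - \<gamma>) * (est_adv (visit P \<gamma> \<pi>k1 s0) q (Vf P r \<gamma> \<pi>k) - \<epsilon> - 2 * \<delta> / (1 - \<gamma>))"
proof -
  have g: "0 \<le> \<gamma>" "\<gamma> < 1" using mdp by (auto simp: is_mdp_def)
  define V where "V = Vf P r \<gamma> \<pi>k"
  define Q where "Q = Qf P r \<gamma> \<pi>k"
  define d' where "d' = visit P \<gamma> \<beta>k1 s0"
  define d where "d = visit P \<gamma> \<beta>k s0"
  define G where "G s a = \<bar>Q s a - q s a\<bar>" for s a
  have Qeq: "Q s a = r s a + \<gamma> * (\<Sum>s'\<in>UNIV. P s a s' * V s')" for s a
    unfolding Q_def V_def Qf_def ..
  have Vb: "\<forall>s. \<bar>V s\<bar> \<le> 1 / (1 - \<gamma>)" unfolding V_def using Vf_bound[OF mdp pol(1)] by blast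
  have pd: "(\<lambda>t. \<gamma>^t * (\<Sum>s\<in>UNIV. \<Sum>a\<in>UNIV. sa_dist P \<beta>k1 s0 t s a * (Q s a - V s)))
      sums (Vf P r \<gamma> \<beta>k1 s0 - V s0)"
    unfolding Qeq by (rule pdl[OF mdp pol(3) Vb])
  have PD: "(\<Sum>s\<in>UNIV. \<Sum>a\<in>UNIV. d' s a * (Q s a - V s)) = (1 - \<gamma>) * (Vf P r \<gamma> \<beta>k1 s0 - V s0)"
    unfolding d'_def visit_sum[OF mdp pol(3)] using sums_unique[OF pd] by simp
  have tv2: "\<forall>s. (\<Sum>a\<in>UNIV. \<bar>\<beta>k1 s a - \<beta>k s a\<bar>) \<le> 2 * (\<delta> * (1 - \<gamma>))"
  proof
    fix s
    have "(\<Sum>a\<in>UNIV. \<bar>\<beta>k1 s a - \<beta>k s a\<bar>) = (\<Sum>a\<in>UNIV. \<bar>\<beta>k s a - \<beta>k1 s a\<bar>)"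
      by (simp add: abs_minus_commute)
    then show "(\<Sum>a\<in>UNIV. \<bar>\<beta>k1 s a - \<beta>k s a\<bar>) \<le> 2 * (\<delta> * (1 - \<gamma>))"
      using tv[rule_format, of s] unfolding tv_dist_def by simp
  qed
  have Gb: "\<forall>s a. 0 \<le> G s a \<and> G s a \<le> 1 / (1 - \<gamma>)"
    using bnd unfolding G_def Q_def by simp
  have vd: "(\<Sum>s\<in>UNIV. \<Sum>a\<in>UNIV. d' s a * G s a) - (\<Sum>s\<in>UNIV. \<Sum>a\<in>UNIV. d s a * G s a)
      \<le> 2 * (\<delta> * (1 - \<gamma>)) * (1 / (1 - \<gamma>)) / (1 - \<gamma>)"
    unfolding d'_def d_def by (rule visit_diff[OF mdp pol(2) pol(3) tv2 Gb])
  also have "\<dots> = 2 * \<delta> / (1 - \<gamma>)" using g by simp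
  finally have vd2: "(\<Sum>s\<in>UNIV. \<Sum>a\<in>UNIV. d' s a * G s a) \<le> \<epsilon> + 2 * \<delta> / (1 - \<gamma>)"
    using err unfolding werr_def d_def G_def Q_def by simp
  have "(\<Sum>s\<in>UNIV. \<Sum>a\<in>UNIV. d' s a * (q s a - Q s a)) \<le> (\<Sum>s\<in>UNIV. \<Sum>a\<in>UNIV. d' s a * G s a)"
    unfolding G_def d'_def using visit_nonneg[OF mdp pol(3)]
    by (intro sum_mono mult_left_mono) auto
  then have e1: "(\<Sum>s\<in>UNIV. \<Sum>a\<in>UNIV. d' s a * (q s a - Q s a)) \<le> \<epsilon> + 2 * \<delta> / (1 - \<gamma>)"
    using vd2 by linarith
  have adv: "est_adv d' q V = (\<Sum>s\<in>UNIV. \<Sum>a\<in>UNIV. d' s a * (Q s a - V s)) + (\<Sum>s\<in>UNIV. \<Sum>a\<in>UNIV. d' s a * (q s a - Q s a))"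
    unfolding est_adv_def by (simp add: sum.distrib[symmetric] algebra_simps)
  have main: "est_adv d' q V - \<epsilon> - 2 * \<delta> / (1 - \<gamma>) \<le> (1 - \<gamma>) * (Vf P r \<gamma> \<beta>k1 s0 - V s0)"
    using adv e1 PD by linarith
  have "1 / (1 - \<gamma>) * (est_adv d' q V - \<epsilon> - 2 * \<delta> / (1 - \<gamma>)) \<le> 1 / (1 - \<gamma>) * ((1 - \<gamma>) * (Vf P r \<gamma> \<beta>k1 s0 - V s0))"
    using g main by (intro mult_left_mono) auto
  also have "\<dots> = Vf P r \<gamma> \<beta>k1 s0 - V s0" using g by simp
  finally show ?thesis unfolding pi_next d'_def V_def by simp
qed

end
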